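(* Let $G$ be an unweighted graph (loops allowed, no parallel edges) with no isolated vertices, with adjacency matrix $A_G$ (diagonal entry $1$ at looped vertices), and let $Q_G(\mathbf{x})=\tfrac12\mathbf{x}^TA_G\mathbf{x}$. The following are equivalent: (1) $G$ is antiferromagnetic; (2) $Q_G$ is Lorentzian; (3) $\operatorname{supp}(Q_G)$ is M-convex; (4) there exist disjoint vertex sets $V_1,V_2$ with $V_1\cup V_2=V(G)$ such that $V_1$ induces a complete multipartite graph (with no loops) and $V_2$ consists of looped vertices each adjacent to all vertices of $G$.
   Context: A symmetric nonnegative matrix (or the corresponding graph) is antiferromagnetic if it has at most one positive eigenvalue, counted with multiplicity. The support $\operatorname{supp}(f)\subseteq\mathbb{N}_0^n$ of a polynomial $f$ is the set of exponent vectors of monomials with nonzero coefficient. A set $S\subseteq\mathbb{N}_0^n$ is M-convex if for all $\mathbf{a},\mathbf{b}\in S$ and every $i$ with $a_i>b_i$ there is $j$ with $a_j<b_j$ and $\mathbf{a}-\mathbf{e}_i+\mathbf{e}_j\in S$. A homogeneous polynomial $f$ with nonnegative coefficients of degree $d\ge2$ is Lorentzian if: for $d=2$, its Hessian $(\partial_i\partial_jf)_{i,j}$ has at most one positive eigenvalue; for $d>2$, every $\partial_if$ is Lorentzian and $\operatorname{supp}(f)$ is M-convex. *)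

theory Defs
  imports "Jordan_Normal_Form.Char_Poly" "HOL-Library.Poly_Mapping" "HOL-Library.Disjoint_Sets"
begin

(* Multivariate polynomials with real coefficients in variables x_0, x_1, ...
   (variables indexed by nat), represented as finitely supported maps
   from exponent vectors (nat \<Rightarrow>\<^sub>0 nat) to coefficients. *)
type_synonym mpoly = "(nat \<Rightarrow>\<^sub>0 nat) \<Rightarrow>\<^sub>0 real"

abbreviation evec :: "nat \<Rightarrow> nat \<Rightarrow>\<^sub>0 nat" where
  "evec i \<equiv> Poly_Mapping.single i 1"

definition supp :: "mpoly \<Rightarrow> (nat \<Rightarrow>\<^sub>0 nat) set" where
  "supp f = Poly_Mapping.keys f"

definition mpderiv :: "nat \<Rightarrow> mpoly \<Rightarrow> mpoly" where
  "mpderiv i f = Abs_poly_mapping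
     (\<lambda>m. of_nat (Poly_Mapping.lookup m i + 1) * Poly_Mapping.lookup f (m + evec i))"

definition mdeg :: "(nat \<Rightarrow>\<^sub>0 nat) \<Rightarrow> nat" where
  "mdeg m = (\<Sum>k\<in>Poly_Mapping.keys m. Poly_Mapping.lookup m k)"

definition homogeneous :: "nat \<Rightarrow> mpoly \<Rightarrow> bool" where
  "homogeneous d f \<longleftrightarrow> (\<forall>m\<in>supp f. mdeg m = d)"

definition nonneg_coeffs :: "mpoly \<Rightarrow> bool" where
  "nonneg_coeffs f \<longleftrightarrow> (\<forall>m. Poly_Mapping.lookup f m \<ge> 0)"

definition in_vars :: "nat \<Rightarrow> mpoly \<Rightarrow> bool" where
  "in_vars n f \<longleftrightarrow> (\<forall>m\<in>supp f. \<forall>k\<in>Poly_Mapping.keys m. k < n)"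

definition M_convex :: "(nat \<Rightarrow>\<^sub>0 nat) set \<Rightarrow> bool" where
  "M_convex S \<longleftrightarrow> (\<forall>a\<in>S. \<forall>b\<in>S. \<forall>i. Poly_Mapping.lookup a i > Poly_Mapping.lookup b i \<longrightarrow>
      (\<exists>j. Poly_Mapping.lookup a j < Poly_Mapping.lookup b j \<and> a - evec i + evec j \<in> S))"

definition num_pos_eigenvalues :: "real mat \<Rightarrow> nat" where
  "num_pos_eigenvalues A =
     (\<Sum>x\<in>{x. 0 < x \<and> poly (char_poly A) x = 0}. order x (char_poly A))"

definition at_most_one_pos_eig :: "real mat \<Rightarrow> bool" where
  "at_most_one_pos_eig A \<longleftrightarrow> num_pos_eigenvalues A \<le> 1"

(* Hessian of f (in variables x_0..x_{n-1}); for a homogeneous quadratic the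
   second partial derivatives are constants, read off at the zero monomial *)
definition hessian :: "nat \<Rightarrow> mpoly \<Rightarrow> real mat" where
  "hessian n f = mat n n (\<lambda>(i,j). Poly_Mapping.lookup (mpderiv i (mpderiv j f)) 0)"

fun lorentzian :: "nat \<Rightarrow> nat \<Rightarrow> mpoly \<Rightarrow> bool" where
  "lorentzian n 0 f = False"
| "lorentzian n (Suc 0) f = False"
| "lorentzian n (Suc (Suc 0)) f \<longleftrightarrow>
     in_vars n f \<and> homogeneous 2 f \<and> nonneg_coeffs f \<and> at_most_one_pos_eig (hessian n f)"
| "lorentzian n (Suc (Suc (Suc k))) f \<longleftrightarrow>
     in_vars n f \<and> homogeneous (Suc (Suc (Suc k))) f \<and> nonneg_coeffs f \<and>
     (\<forall>i<n. lorentzian n (Suc (Suc k)) (mpderiv i f)) \<and> M_convex (supp f)"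

(* Graphs on vertex set {0..<n}: E symmetric, loops (E v v) allowed,
   no parallel edges (E is a relation). *)
definition adj_matrix :: "nat \<Rightarrow> (nat \<Rightarrow> nat \<Rightarrow> bool) \<Rightarrow> real mat" where
  "adj_matrix n E = mat n n (\<lambda>(i,j). if E i j then 1 else 0)"

definition antiferromagnetic :: "nat \<Rightarrow> (nat \<Rightarrow> nat \<Rightarrow> bool) \<Rightarrow> bool" where
  "antiferromagnetic n E \<longleftrightarrow> at_most_one_pos_eig (adj_matrix n E)"

definition QG :: "nat \<Rightarrow> (nat \<Rightarrow> nat \<Rightarrow> bool) \<Rightarrow> mpoly" where
  "QG n E = (\<Sum>i<n. \<Sum>j<n.
      Poly_Mapping.single (evec i + evec j) ((1/2) * (adj_matrix n E $$ (i,j))))"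

definition induces_complete_multipartite :: "(nat \<Rightarrow> nat \<Rightarrow> bool) \<Rightarrow> nat set \<Rightarrow> bool" where
  "induces_complete_multipartite E V1 \<longleftrightarrow>
     (\<exists>P. partition_on V1 P \<and>
        (\<forall>u\<in>V1. \<forall>v\<in>V1. E u v \<longleftrightarrow> \<not> (\<exists>X\<in>P. u \<in> X \<and> v \<in> X)))"

end

theory Submission
  imports Defs
begin

lemma sym_eigenvalue_real:
  fixes A :: "real mat" and a :: complex
  assumes A: "A \<in> carrier_mat n n" and sym: "\<And>i j. i < n \<Longrightarrow> j < n \<Longrightarrow> A $$ (i,j) = A $$ (j,i)"
    and ev: "eigenvalue (map_mat complex_of_real A) a"
  shows "Im a = 0"
proof -
  let ?A = "map_mat complex_of_real A"
  from ev obtain v where evv: "eigenvector ?A v a" unfolding eigenvalue_def by auto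
  have v: "v \<in> carrier_vec n" and v0: "v \<noteq> 0\<^sub>v n" and Av: "?A *\<^sub>v v = a \<cdot>\<^sub>v v"
    using evv A unfolding eigenvector_def by auto
  have comp: "(\<Sum>j<n. complex_of_real (A $$ (i,j)) * v $ j) = a * v $ i" if i: "i < n" for i
  proof -
    have "(?A *\<^sub>v v) $ i = a * v $ i" using Av i v by simp
    moreover have "(?A *\<^sub>v v) $ i = (\<Sum>j<n. complex_of_real (A $$ (i,j)) * v $ j)"
      using i A v by (simp add: mult_mat_vec_def scalar_prod_def row_def atLeast0LessThan)
    ultimately show ?thesis by simp
  qed
  define s where "s = (\<Sum>i<n. cnj (v $ i) * (\<Sum>j<n. complex_of_real (A $$ (i,j)) * v $ j))"
  define N where "N = (\<Sum>i<n. cnj (v $ i) * v $ i)"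
  have s1: "s = a * N" unfolding s_def N_def
    by (auto simp: comp sum_distrib_left intro!: sum.cong)
  have "cnj s = (\<Sum>i<n. v $ i * (\<Sum>j<n. complex_of_real (A $$ (i,j)) * cnj (v $ j)))"
    unfolding s_def by (simp add: sum_distrib_left)
  also have "\<dots> = (\<Sum>i<n. \<Sum>j<n. complex_of_real (A $$ (i,j)) * v $ i * cnj (v $ j))"
    by (simp add: sum_distrib_left mult_ac)
  also have "\<dots> = (\<Sum>j<n. \<Sum>i<n. complex_of_real (A $$ (i,j)) * v $ i * cnj (v $ j))"
    by (rule sum.swap)
  also have "\<dots> = s" unfolding s_def
    by (auto simp: sum_distrib_left mult_ac sym intro!: sum.cong)
  finally have "cnj s = s" .
  hence ims: "Im s = 0" by (metis cnj.sel(2) complex_cnj_cancel_iff neg_equal_zero)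
  have cz: "cnj z * z = complex_of_real ((cmod z)^2)" for z
    by (metis complex_norm_square mult.commute)
  have Nr: "N = complex_of_real (\<Sum>i<n. (cmod (v $ i))^2)" unfolding N_def of_real_sum cz ..
  have "\<exists>i<n. v $ i \<noteq> 0" using v v0 by (metis eq_vecI index_zero_vec(1) index_zero_vec(2) carrier_vecD)
  then obtain i where i: "i < n" "v $ i \<noteq> 0" by auto
  have "(\<Sum>i<n. (cmod (v $ i))^2) > 0"
  proof (rule sum_pos2[of _ i])
    show "(cmod (v $ i))\<^sup>2 > 0" using i by simp
  qed (use i in auto)
  hence "Re N > 0" "Im N = 0" unfolding Nr by auto
  moreover have "Im s = Im a * Re N" using s1 \<open>Im N = 0\<close> by simp
  ultimately show ?thesis using ims by simp
qed

lemma sym_char_poly_split: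
  fixes A :: "real mat"
  assumes A: "A \<in> carrier_mat n n" and sym: "\<And>i j. i < n \<Longrightarrow> j < n \<Longrightarrow> A $$ (i,j) = A $$ (j,i)"
  shows "\<exists>es. char_poly A = (\<Prod>e\<leftarrow>es. [:-e,1:]) \<and> length es = n"
proof -
  let ?A = "map_mat complex_of_real A"
  have A': "?A \<in> carrier_mat n n" using A by simp
  obtain as where cp: "char_poly ?A = (\<Prod>a\<leftarrow>as. [:-a,1:])" and len: "length as = n"
    using char_poly_factorized[OF A'] by auto
  have re: "Im a = 0" if a: "a \<in> set as" for a
  proof -
    have "poly (char_poly ?A) a = 0" unfolding cp using a
      by (simp add: poly_prod_list prod_list_zero_iff)
    hence "eigenvalue ?A a" using eigenvalue_root_char_poly[OF A'] by simp
    thus ?thesis using sym_eigenvalue_real[OF A sym] by blast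
  qed
  define es where "es = map Re as"
  have as: "as = map complex_of_real es" unfolding es_def
    by (rule nth_equalityI) (auto simp: complex_eq_iff re)
  interpret rp: map_poly_inj_idom_hom "complex_of_real" ..
  have "map_poly complex_of_real (\<Prod>e\<leftarrow>es. [:-e,1:]) = (\<Prod>a\<leftarrow>as. [:-a,1:])"
    unfolding as rp.hom_prod_list by (simp add: o_def)
  also have "\<dots> = map_poly complex_of_real (char_poly A)"
    unfolding cp[symmetric] using of_real_hom.char_poly_hom[OF A] by simp
  finally have "char_poly A = (\<Prod>e\<leftarrow>es. [:-e,1:])" using rp.eq_iff by metis
  moreover have "length es = n" using len es_def by simp
  ultimately show ?thesis by blast
qed

lemma delta_sum1: "i < (n::nat) \<Longrightarrow> (\<Sum>k = 0..<n. (if i = k then 1 else 0) * f k) = (f i :: real)"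
proof -
  assume i: "i < n"
  have "(\<Sum>k = 0..<n. (if i = k then 1 else 0) * f k) = (\<Sum>k = 0..<n. (if k = i then f i else 0))"
    by (rule sum.cong) auto
  also have "\<dots> = f i" using i by (subst sum.delta) auto
  finally show ?thesis .
qed

lemma delta_sum2: "i < (n::nat) \<Longrightarrow> (\<Sum>k = 0..<n. (if k = i then 1 else 0) * f k) = (f i :: real)"
  using delta_sum1[of i n f] by (simp add: eq_commute[of i])

lemma householder:
  fixes v :: "real vec"
  assumes v: "v \<in> carrier_vec n" and n: "0 < n" and unit: "v \<bullet> v = 1"
  shows "\<exists>H \<in> carrier_mat n n. transpose_mat H = H \<and> H * H = 1\<^sub>m n \<and> (\<forall>i<n. H $$ (i,0) = v $ i)"
proof -
  define u where "u i = v $ i - (if i = 0 then 1 else 0)" for i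
  define uu where "uu = (\<Sum>k = 0..<n. u k * u k)"
  define c where "c = (if uu = 0 then 0 else 2 / uu)"
  define H where "H = mat n n (\<lambda>(i,j). (if i = j then 1 else 0) - c * u i * u j)"
  have Hc: "H \<in> carrier_mat n n" unfolding H_def by simp
  have cuu: "c * c * uu = 2 * c" unfolding c_def by (simp add: power2_eq_square field_simps)
  have T: "transpose_mat H = H" unfolding H_def by (rule eq_matI) (auto simp: mult_ac)
  have entry: "(\<Sum>k = 0..<n. ((if i = k then 1 else 0) - c * u i * u k) * ((if k = j then 1 else 0) - c * u k * u j))
     = (if i = j then 1 else 0)" if ij: "i < n" "j < n" for i j
  proof -
    have "(\<Sum>k = 0..<n. ((if i = k then 1 else 0) - c * u i * u k) * ((if k = j then 1 else 0) - c * u k * u j))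
      = (\<Sum>k = 0..<n. (if i = k then 1 else 0) * (if k = j then 1 else 0))
        - (\<Sum>k = 0..<n. (if i = k then 1 else 0) * (c * u k * u j))
        - (\<Sum>k = 0..<n. (if k = j then 1 else 0) * (c * u i * u k))
        + c * c * u i * u j * (\<Sum>k = 0..<n. u k * u k)"
      by (simp add: algebra_simps sum.distrib sum_subtractf sum_distrib_left)
    also have "\<dots> = (if i = j then 1 else 0) - c * u i * u j - c * u i * u j + c * c * uu * u i * u j"
      using ij unfolding uu_def by (simp add: delta_sum1 delta_sum2)
    also have "c * c * uu * u i * u j = 2 * c * u i * u j" by (simp only: cuu)
    hence "(if i = j then 1 else 0) - c * u i * u j - c * u i * u j + c * c * uu * u i * u j = (if i = j then 1 else 0)"
      by (simp; blast)
    finally show ?thesis .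
  qed
  have HH: "H * H = 1\<^sub>m n"
    by (rule eq_matI) (auto simp: H_def scalar_prod_def entry)
  have col0: "H $$ (i,0) = v $ i" if i: "i < n" for i
  proof (cases "uu = 0")
    case True
    have "\<forall>k\<in>{0..<n}. u k * u k = 0"
      using True unfolding uu_def by (subst (asm) sum_nonneg_eq_0_iff) auto
    hence "u i = 0" using i by auto
    thus ?thesis using i n unfolding H_def c_def u_def by (auto simp: True)
  next
    case False
    have vv: "(\<Sum>k = 0..<n. v $ k * v $ k) = 1" using unit v by (simp add: scalar_prod_def)
    have "uu = (\<Sum>k = 0..<n. v $ k * v $ k + (if k = 0 then 1 - 2 * v $ 0 else 0))"
      unfolding uu_def u_def by (rule sum.cong) (auto simp: algebra_simps)
    also have "\<dots> = (\<Sum>k = 0..<n. v $ k * v $ k) + (\<Sum>k = 0..<n. (if k = 0 then 1 - 2 * v $ 0 else 0))"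
      by (rule sum.distrib)
    also have "(\<Sum>k = 0..<n. (if k = 0 then 1 - 2 * v $ 0 else 0)) = 1 - 2 * v $ 0"
      using n by (subst sum.delta) auto
    also have "(\<Sum>k = 0..<n. v $ k * v $ k) + (1 - 2 * v $ 0) = 2 - 2 * v $ 0" using vv by simp
    finally have uu0: "uu = - 2 * u 0" unfolding u_def by simp
    hence "c * u 0 = -1" using False unfolding c_def by (simp add: field_simps)
    hence "c * u i * u 0 = - u i" by (metis mult.assoc mult.commute mult_minus1)
    thus ?thesis using i n unfolding H_def u_def by auto
  qed
  show ?thesis using Hc T HH col0 by blast
qed

lemma spectral_aux:
  fixes A :: "real mat"
  assumes "A \<in> carrier_mat n n" "transpose_mat A = A" "char_poly A = (\<Prod>e\<leftarrow>es. [:-e,1:])"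
  shows "\<exists>P \<in> carrier_mat n n. transpose_mat P * P = 1\<^sub>m n \<and>
           transpose_mat P * A * P = mat n n (\<lambda>(i,j). if i = j then es ! i else 0)"
  using assms
proof (induction es arbitrary: n A)
  case Nil
  from degree_monic_char_poly[OF Nil(1)] Nil(3) have n: "n = 0" by simp
  show ?case
    by (rule bexI[of _ "1\<^sub>m n"]) (auto simp: n intro!: eq_matI)
next
  case (Cons e es n A)
  note A = Cons.prems(1) and symA = Cons.prems(2)
  have cp: "char_poly A = [:-e,1:] * (\<Prod>e\<leftarrow>es. [:-e,1:])" using Cons.prems(3) by simp
  have mon: "monic (\<Prod>e\<leftarrow> es. [:- e, 1:])" by (rule monic_prod_list, auto)
  have deg: "degree (char_poly A) = Suc (degree (\<Prod>e\<leftarrow> es. [:- e, 1:]))" unfolding cp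
    by (subst degree_mult_eq, insert mon, auto)
  with degree_monic_char_poly[OF A] obtain m where nm: "n = Suc m" by (cases n) auto
  have "poly (char_poly A) e = 0" unfolding cp by simp
  hence "eigenvalue A e" using eigenvalue_root_char_poly[OF A] by simp
  from find_eigenvector[OF A this] obtain v0 where ev0: "eigenvector A v0 e" by blast
  hence v0: "v0 \<in> carrier_vec n" and v00: "v0 \<noteq> 0\<^sub>v n" and Av0: "A *\<^sub>v v0 = e \<cdot>\<^sub>v v0"
    using A unfolding eigenvector_def by auto
  have "\<exists>i<n. v0 $ i \<noteq> 0" using v0 v00 by (metis eq_vecI index_zero_vec(1) index_zero_vec(2) carrier_vecD)
  then obtain i0 where i0: "i0 < n" "v0 $ i0 \<noteq> 0" by auto
  have pos: "v0 \<bullet> v0 > 0" unfolding scalar_prod_def using v0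
    by (intro sum_pos2[of _ i0]) (use i0 in \<open>auto simp: zero_less_mult_iff linorder_neq_iff\<close>)
  define s where "s = sqrt (v0 \<bullet> v0)"
  have s: "s > 0" "s * s = v0 \<bullet> v0" unfolding s_def using pos by auto
  define v where "v = (1 / s) \<cdot>\<^sub>v v0"
  have v: "v \<in> carrier_vec n" unfolding v_def using v0 by simp
  have vv: "v \<bullet> v = 1" unfolding v_def using v0 s pos
    by (simp add: smult_scalar_prod_distrib scalar_prod_smult_distrib)
  have Av: "A *\<^sub>v v = e \<cdot>\<^sub>v v" unfolding v_def using A v0 Av0
    by (simp add: mult_mat_vec smult_smult_assoc mult.commute)
  from householder[OF v _ vv] nm obtain H where H: "H \<in> carrier_mat n n" and HT: "transpose_mat H = H"
    and HH: "H * H = 1\<^sub>m n" and Hcol: "\<And>i. i < n \<Longrightarrow> H $$ (i,0) = v $ i" by auto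
  have colH: "col H 0 = v" using H v Hcol nm by (intro eq_vecI) auto
  define A' where "A' = H * A * H"
  have A': "A' \<in> carrier_mat n n" unfolding A'_def using H A by simp
  have symA': "transpose_mat A' = A'"
  proof -
    have "transpose_mat A' = transpose_mat H * transpose_mat (H * A)"
      unfolding A'_def by (rule transpose_mult[of "H * A" n n H n]) (use H A in auto)
    also have "transpose_mat (H * A) = transpose_mat A * transpose_mat H"
      by (rule transpose_mult[of H n n A n]) (use H A in auto)
    also have "transpose_mat H * (transpose_mat A * transpose_mat H) = H * (A * H)" using HT symA by simp
    also have "\<dots> = A'" unfolding A'_def using H A by simp
    finally show ?thesis .
  qed
  have Hv: "H *\<^sub>v v = unit_vec n 0"
  proof -
    have "col (H * H) 0 = H *\<^sub>v col H 0" by (rule col_mult2[of _ n n]) (use H nm in auto)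
    hence "H *\<^sub>v v = col (H * H) 0" using colH by simp
    also have "\<dots> = unit_vec n 0" unfolding HH using nm by simp
    finally show ?thesis .
  qed
  have colA': "col A' 0 = e \<cdot>\<^sub>v unit_vec n 0"
  proof -
    have "col A' 0 = (H * A) *\<^sub>v col H 0" unfolding A'_def by (rule col_mult2[of _ n n]) (use H A nm in auto)
    also have "\<dots> = H *\<^sub>v (A *\<^sub>v v)" using H A v colH by simp
    also have "\<dots> = e \<cdot>\<^sub>v unit_vec n 0" using H v by (simp add: Av mult_mat_vec Hv)
    finally show ?thesis .
  qed
  have A'i0: "A' $$ (i,0) = (if i = 0 then e else 0)" if "i < n" for i
    using arg_cong[OF colA', of "\<lambda>x. x $ i"] that A' nm by auto
  have A'0j: "A' $$ (0,j) = (if j = 0 then e else 0)" if "j < n" for j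
  proof -
    have "A' $$ (0,j) = transpose_mat A' $$ (j,0)" using that A' nm by simp
    thus ?thesis using symA' A'i0[OF that] by simp
  qed
  define A3 where "A3 = mat m m (\<lambda>(i,j). A' $$ (Suc i, Suc j))"
  have A3: "A3 \<in> carrier_mat m m" unfolding A3_def by simp
  define E1 where "E1 = mat 1 1 (\<lambda>_. e)"
  have E1: "E1 \<in> carrier_mat 1 1" unfolding E1_def by simp
  have blk: "A' = four_block_mat E1 (0\<^sub>m 1 m) (0\<^sub>m m 1) A3"
    by (rule eq_matI) (use A' nm A'i0 A'0j in \<open>auto simp: A3_def E1_def\<close>)
  have symA3: "transpose_mat A3 = A3"
  proof (rule eq_matI)
    fix i j assume "i < dim_row A3" "j < dim_col A3"
    hence ij: "i < m" "j < m" using A3 by auto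
    have "A' $$ (Suc j, Suc i) = transpose_mat A' $$ (Suc i, Suc j)" using ij A' nm by simp
    thus "transpose_mat A3 $$ (i, j) = A3 $$ (i, j)" using ij symA' unfolding A3_def by simp
  qed (use A3 in auto)
  have simil: "similar_mat A' A" unfolding similar_mat_def
    by (rule exI[of _ H], rule exI[of _ H]) (use A' A H HH in \<open>auto simp: similar_mat_wit_def A'_def\<close>)
  have "char_poly A' = char_poly E1 * char_poly A3"
    unfolding blk by (rule char_poly_four_block_zeros_col[OF E1 _ A3]) simp
  also have "char_poly E1 = [: -e,1 :]"
    by (simp add: E1_def char_poly_defs det_def sign_def)
  finally have "[:-e,1:] * char_poly A3 = [:-e,1:] * (\<Prod>e\<leftarrow>es. [:-e,1:])"
    using char_poly_similar[OF simil] cp by simp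
  hence cp3: "char_poly A3 = (\<Prod>e\<leftarrow>es. [:-e,1:])"
    by (metis mult_cancel_left pCons_eq_0_iff zero_neq_one)
  from Cons.IH[OF A3 symA3 cp3] obtain P3 where P3: "P3 \<in> carrier_mat m m"
    and P3P3: "transpose_mat P3 * P3 = 1\<^sub>m m"
    and P3A3: "transpose_mat P3 * A3 * P3 = mat m m (\<lambda>(i,j). if i = j then es ! i else 0)" by blast
  define F where "F = four_block_mat (1\<^sub>m 1) (0\<^sub>m 1 m) (0\<^sub>m m 1) P3"
  have F: "F \<in> carrier_mat n n" unfolding F_def
    using four_block_carrier_mat[of "1\<^sub>m 1" 1 1 P3 m m "0\<^sub>m 1 m" "0\<^sub>m m 1"] nm P3 by simp
  have FT: "transpose_mat F = four_block_mat (1\<^sub>m 1) (0\<^sub>m 1 m) (0\<^sub>m m 1) (transpose_mat P3)"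
    unfolding F_def by (rule trans[OF transpose_four_block_mat]) (use P3 in auto)
  have FTc: "transpose_mat F \<in> carrier_mat n n" using F by simp
  define P where "P = H * F"
  have P: "P \<in> carrier_mat n n" unfolding P_def using H F by simp
  have PT: "transpose_mat P = transpose_mat F * H" unfolding P_def using H F HT
    by (simp add: transpose_mult[of _ n n])
  have "transpose_mat P * P = transpose_mat F * (H * H) * F" unfolding PT
    using H F FTc by (simp add: P_def assoc_mult_mat[of _ n n _ n _ n])
  also have "\<dots> = transpose_mat F * F" unfolding HH using F FTc by simp
  also have "\<dots> = four_block_mat (1\<^sub>m 1) (0\<^sub>m 1 m) (0\<^sub>m m 1) (1\<^sub>m m)"
    unfolding FT unfolding F_def by (rule trans[OF mult_four_block_mat]) (use P3 P3P3 in auto)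
  also have "\<dots> = 1\<^sub>m n" using nm four_block_one_mat[of 1 m] by simp
  finally have PP: "transpose_mat P * P = 1\<^sub>m n" .
  have "transpose_mat P * A * P = transpose_mat F * A' * F" unfolding PT
    using H F FTc A by (simp add: P_def A'_def assoc_mult_mat[of _ n n _ n _ n])
  also have "\<dots> = four_block_mat E1 (0\<^sub>m 1 m) (0\<^sub>m m 1) (transpose_mat P3 * A3 * P3)"
    unfolding FT unfolding F_def blk
    by (rule trans[OF arg_cong2[of _ _ _ _ "(*)", OF mult_four_block_mat refl]],
        (use P3 A3 E1 in auto)[8], rule trans[OF mult_four_block_mat]) (use P3 A3 E1 in auto)
  also have "\<dots> = mat n n (\<lambda>(i,j). if i = j then (e # es) ! i else 0)"
    unfolding P3A3 by (rule eq_matI) (auto simp: nm E1_def)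
  finally show ?case using P PP by blast
qed

definition qf :: "real mat \<Rightarrow> nat \<Rightarrow> (nat \<Rightarrow> real) \<Rightarrow> real" where
  "qf A n f = (\<Sum>i<n. \<Sum>j<n. A $$ (i,j) * f i * f j)"

definition hyp_neg :: "real mat \<Rightarrow> nat \<Rightarrow> bool" where
  "hyp_neg A n \<longleftrightarrow> (\<exists>w. \<forall>f. (\<Sum>i<n. w i * f i) = 0 \<longrightarrow> qf A n f \<le> 0)"

lemma not_hyp_neg:
  assumes pd: "\<And>a b. a \<noteq> 0 \<or> b \<noteq> 0 \<Longrightarrow> qf A n (\<lambda>k. a * X k + b * Y k) > 0"
  shows "\<not> hyp_neg A n"
proof
  assume "hyp_neg A n"
  then obtain w where w: "\<And>f. (\<Sum>i<n. w i * f i) = 0 \<Longrightarrow> qf A n f \<le> 0"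
    unfolding hyp_neg_def by blast
  define sx where "sx = (\<Sum>i<n. w i * X i)"
  define sy where "sy = (\<Sum>i<n. w i * Y i)"
  have lin: "(\<Sum>i<n. w i * (a * X i + b * Y i)) = a * sx + b * sy" for a b
    unfolding sx_def sy_def by (simp add: algebra_simps sum.distrib sum_distrib_left)
  show False
  proof (cases "sy \<noteq> 0 \<or> sx \<noteq> 0")
    case True
    hence "sy \<noteq> 0 \<or> - sx \<noteq> 0" by auto
    from pd[OF this] w[of "\<lambda>k. sy * X k + (- sx) * Y k"] lin[of sy "- sx"] show False
      by (simp add: mult.commute)
  next
    case False
    from pd[of 1 0] w[of "\<lambda>k. 1 * X k + 0 * Y k"] lin[of 1 0] False show False by simp
  qed
qed

lemma qf_vec:
  assumes A: "A \<in> carrier_mat n n" and x: "x \<in> carrier_vec n"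
  shows "x \<bullet> (A *\<^sub>v x) = qf A n (\<lambda>i. x $ i)"
  unfolding qf_def using A x
  by (simp add: scalar_prod_def mult_mat_vec_def row_def atLeast0LessThan sum_distrib_left mult_ac)

lemma sum_count_list: "finite S \<Longrightarrow> (\<Sum>x\<in>S. count_list xs x) = length (filter (\<lambda>x. x \<in> S) xs)"
proof (induction xs)
  case (Cons a xs)
  have "(\<Sum>x\<in>S. count_list (a # xs) x) = (\<Sum>x\<in>S. count_list xs x + (if x = a then 1 else 0))"
    by (rule sum.cong) auto
  also have "\<dots> = (\<Sum>x\<in>S. count_list xs x) + (\<Sum>x\<in>S. (if x = a then 1 else 0))"
    by (rule sum.distrib)
  also have "(\<Sum>x\<in>S. (if x = a then 1 else 0)) = (if a \<in> S then 1 else 0)"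
    using Cons.prems by simp
  finally show ?case using Cons by simp
qed simp

lemma num_pos_split:
  fixes A :: "real mat"
  assumes cp: "char_poly A = (\<Prod>e\<leftarrow>es. [:-e,1:])"
  shows "num_pos_eigenvalues A = length (filter (\<lambda>e. e > 0) es)"
proof -
  have roots: "{x. 0 < x \<and> poly (char_poly A) x = 0} = {x. x \<in> set es \<and> 0 < x}"
    unfolding cp by (auto simp: poly_prod_list prod_list_zero_iff)
  have ord: "order x (char_poly A) = count_list es x" for x
    unfolding cp
    by (subst order_prod_list) (auto simp: order_linear' o_def, induction es, auto)
  have "num_pos_eigenvalues A = (\<Sum>x\<in>{x. x \<in> set es \<and> 0 < x}. count_list es x)"
    unfolding num_pos_eigenvalues_def roots ord ..
  also have "\<dots> = length (filter (\<lambda>x. x \<in> {x. x \<in> set es \<and> 0 < x}) es)"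
    by (rule sum_count_list) simp
  also have "filter (\<lambda>x. x \<in> {x. x \<in> set es \<and> 0 < x}) es = filter (\<lambda>e. e > 0) es"
    by (rule filter_cong) auto
  finally show ?thesis .
qed

lemma pos_eig_iff:
  fixes A :: "real mat"
  assumes A: "A \<in> carrier_mat n n" and sym: "transpose_mat A = A"
  shows "at_most_one_pos_eig A \<longleftrightarrow> hyp_neg A n"
proof -
  have symE: "A $$ (i,j) = A $$ (j,i)" if "i < n" "j < n" for i j
  proof -
    have "A $$ (i,j) = transpose_mat A $$ (i,j)" using sym by simp
    also have "\<dots> = A $$ (j,i)" using that A by simp
    finally show ?thesis .
  qed
  obtain es where cp: "char_poly A = (\<Prod>e\<leftarrow>es. [:-e,1:])" and len: "length es = n"
    using sym_char_poly_split[OF A symE] by blast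
  obtain P where P: "P \<in> carrier_mat n n" and PP: "transpose_mat P * P = 1\<^sub>m n"
    and PAP: "transpose_mat P * A * P = mat n n (\<lambda>(i,j). if i = j then es ! i else 0)"
    using spectral_aux[OF A sym cp] by blast
  have PT: "transpose_mat P \<in> carrier_mat n n" using P by simp
  have PPT: "P * transpose_mat P = 1\<^sub>m n" by (rule mat_mult_left_right_inverse[OF PT P PP])
  have K: "(P *\<^sub>v y) \<bullet> (A *\<^sub>v (P *\<^sub>v y)) = (\<Sum>k<n. es ! k * (y $ k)^2)"
    if y: "y \<in> carrier_vec n" for y
  proof -
    have Py: "P *\<^sub>v y \<in> carrier_vec n" using P y by simp
    have APy: "A *\<^sub>v (P *\<^sub>v y) \<in> carrier_vec n" using A Py by simp
    have "(P *\<^sub>v y) \<bullet> (A *\<^sub>v (P *\<^sub>v y)) = (A *\<^sub>v (P *\<^sub>v y)) \<bullet> (P *\<^sub>v y)"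
      by (rule comm_scalar_prod[OF Py APy])
    also have "\<dots> = (transpose_mat P *\<^sub>v (A *\<^sub>v (P *\<^sub>v y))) \<bullet> y"
      by (rule transpose_vec_mult_scalar[OF P y APy, symmetric])
    also have "transpose_mat P *\<^sub>v (A *\<^sub>v (P *\<^sub>v y)) = (transpose_mat P * A * P) *\<^sub>v y"
    proof -
      have "(transpose_mat P * A * P) *\<^sub>v y = (transpose_mat P * A) *\<^sub>v (P *\<^sub>v y)"
        by (rule assoc_mult_mat_vec[of _ n n _ n y]) (use P A y PT in auto)
      also have "\<dots> = transpose_mat P *\<^sub>v (A *\<^sub>v (P *\<^sub>v y))"
        by (rule assoc_mult_mat_vec[of _ n n _ n]) (use P A y PT in auto)
      finally show ?thesis by simp
    qed
    also have "\<dots> = vec n (\<lambda>k. es ! k * y $ k)" unfolding PAP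
    proof (rule eq_vecI)
      fix k assume "k < dim_vec (vec n (\<lambda>k. es ! k * y $ k))"
      hence k: "k < n" by simp
      have "(mat n n (\<lambda>(i, j). if i = j then es ! i else 0) *\<^sub>v y) $ k
          = (\<Sum>l = 0..<n. (if k = l then 1 else 0) * (es ! k * y $ l))"
        using k y by (auto simp: mult_mat_vec_def scalar_prod_def intro!: sum.cong)
      also have "\<dots> = es ! k * y $ k" using k by (rule delta_sum1)
      finally show "(mat n n (\<lambda>(i, j). if i = j then es ! i else 0) *\<^sub>v y) $ k = vec n (\<lambda>k. es ! k * y $ k) $ k"
        using k by simp
    qed simp
    also have "vec n (\<lambda>k. es ! k * y $ k) \<bullet> y = (\<Sum>k<n. es ! k * (y $ k)^2)"
      using y by (simp add: scalar_prod_def atLeast0LessThan power2_eq_square mult_ac)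
    finally show ?thesis .
  qed
  have np: "num_pos_eigenvalues A = card {k. k < n \<and> es ! k > 0}"
    unfolding num_pos_split[OF cp] length_filter_conv_card len ..
  have fin: "finite {k. k < n \<and> es ! k > 0}" by simp
  show ?thesis
  proof
    assume "at_most_one_pos_eig A"
    hence "card {k. k < n \<and> es ! k > 0} \<le> Suc 0" unfolding at_most_one_pos_eig_def np by simp
    hence uniq: "\<And>k1 k2. k1 < n \<Longrightarrow> es ! k1 > 0 \<Longrightarrow> k2 < n \<Longrightarrow> es ! k2 > 0 \<Longrightarrow> k1 = k2"
      using card_le_Suc0_iff_eq[OF fin] by blast
    obtain k0 where k0: "\<And>k. k < n \<Longrightarrow> es ! k > 0 \<Longrightarrow> k = k0"
      using uniq by blast
    show "hyp_neg A n" unfolding hyp_neg_def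
    proof (intro exI allI impI)
      fix f assume wf: "(\<Sum>i<n. P $$ (i,k0) * f i) = 0"
      define x where "x = vec n f"
      have x: "x \<in> carrier_vec n" unfolding x_def by simp
      define y where "y = transpose_mat P *\<^sub>v x"
      have y: "y \<in> carrier_vec n" unfolding y_def using PT x by simp
      have xPy: "P *\<^sub>v y = x" unfolding y_def using P PT x
        by (simp add: assoc_mult_mat_vec[symmetric] PPT)
      have "qf A n f = qf A n (\<lambda>i. x $ i)" unfolding qf_def x_def by simp
      also have "\<dots> = x \<bullet> (A *\<^sub>v x)" using qf_vec[OF A x] by simp
      also have "\<dots> = (\<Sum>k<n. es ! k * (y $ k)^2)" using K[OF y] xPy by simp
      also have "\<dots> \<le> 0"
      proof (rule sum_nonpos)
        fix k assume "k \<in> {..<n}"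
        hence k: "k < n" by simp
        show "es ! k * (y $ k)^2 \<le> 0"
        proof (cases "k = k0")
          case True
          have "y $ k = (\<Sum>i<n. P $$ (i,k0) * f i)" unfolding y_def x_def True
            using P k True by (simp add: mult_mat_vec_def scalar_prod_def atLeast0LessThan)
          thus ?thesis using wf by simp
        next
          case False
          hence "es ! k \<le> 0" using k0[OF k] by force
          thus ?thesis by (simp add: mult_nonpos_nonneg)
        qed
      qed
      finally show "qf A n f \<le> 0" .
    qed
  next
    assume hn: "hyp_neg A n"
    show "at_most_one_pos_eig A"
    proof (rule ccontr)
      assume "\<not> at_most_one_pos_eig A"
      hence "\<not> card {k. k < n \<and> es ! k > 0} \<le> Suc 0" unfolding at_most_one_pos_eig_def np by simp
      then obtain i j where i: "i < n" "es ! i > 0" and j: "j < n" "es ! j > 0" and ij: "i \<noteq> j"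
        using card_le_Suc0_iff_eq[OF fin] by blast
      have "\<not> hyp_neg A n"
      proof (rule not_hyp_neg[of _ _ "\<lambda>k. P $$ (k,i)" "\<lambda>k. P $$ (k,j)"])
        fix a b :: real assume ab: "a \<noteq> 0 \<or> b \<noteq> 0"
        define y where "y = vec n (\<lambda>l. (if l = i then a else 0) + (if l = j then b else 0))"
        have y: "y \<in> carrier_vec n" unfolding y_def by simp
        have Py: "P *\<^sub>v y = vec n (\<lambda>k. a * P $$ (k,i) + b * P $$ (k,j))"
        proof (rule eq_vecI)
          fix k assume "k < dim_vec (vec n (\<lambda>k. a * P $$ (k,i) + b * P $$ (k,j)))"
          hence k: "k < n" by simp
          have "(P *\<^sub>v y) $ k = (\<Sum>l = 0..<n. P $$ (k,l) * ((if l = i then a else 0) + (if l = j then b else 0)))"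
            using P k by (simp add: mult_mat_vec_def scalar_prod_def y_def)
          also have "\<dots> = (\<Sum>l = 0..<n. (if l = i then 1 else 0) * (a * P $$ (k,l)))
                + (\<Sum>l = 0..<n. (if l = j then 1 else 0) * (b * P $$ (k,l)))"
            by (simp add: sum.distrib[symmetric]) (rule sum.cong, auto simp: algebra_simps)
          also have "\<dots> = a * P $$ (k,i) + b * P $$ (k,j)"
            using i j by (simp add: delta_sum2)
          finally show "(P *\<^sub>v y) $ k = vec n (\<lambda>k. a * P $$ (k,i) + b * P $$ (k,j)) $ k" using k by simp
        qed (use P in simp)
        have "qf A n (\<lambda>k. a * P $$ (k,i) + b * P $$ (k,j)) = qf A n (\<lambda>k. (P *\<^sub>v y) $ k)"
          unfolding qf_def Py by simp
        also have "\<dots> = (P *\<^sub>v y) \<bullet> (A *\<^sub>v (P *\<^sub>v y))" using qf_vec[OF A, of "P *\<^sub>v y"] P y by simp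
        also have "\<dots> = (\<Sum>k<n. es ! k * (y $ k)^2)" by (rule K[OF y])
        also have "\<dots> = (\<Sum>k<n. (if k = i then es ! i * a^2 else 0) + (if k = j then es ! j * b^2 else 0))"
          unfolding y_def using ij by (intro sum.cong) auto
        also have "\<dots> = es ! i * a^2 + es ! j * b^2" using i j by (simp add: sum.distrib)
        finally have eq: "qf A n (\<lambda>k. a * P $$ (k,i) + b * P $$ (k,j)) = es ! i * a^2 + es ! j * b^2" .
        have "es ! i * a^2 + es ! j * b^2 > 0"
          using ab i j by (auto intro: add_pos_nonneg add_nonneg_pos)
        thus "qf A n (\<lambda>k. a * P $$ (k,i) + b * P $$ (k,j)) > 0" using eq by simp
      qed
      with hn show False by simp
    qed
  qed
qed

definition good_graph :: "nat \<Rightarrow> (nat \<Rightarrow> nat \<Rightarrow> bool) \<Rightarrow> bool" where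
  "good_graph n E \<longleftrightarrow> (\<forall>v<n. E v v \<longrightarrow> (\<forall>u<n. E v u)) \<and>
     (\<forall>c<n. \<forall>a<n. \<forall>b<n. \<not> E c c \<longrightarrow> \<not> E a a \<longrightarrow> \<not> E b b \<longrightarrow> \<not> E c a \<longrightarrow> \<not> E c b \<longrightarrow> \<not> E a b)"

lemma struct_imp_good:
  assumes V: "V1 \<inter> V2 = {}" "V1 \<union> V2 = {0..<n}" and cm: "induces_complete_multipartite E V1"
    and V2: "\<forall>v\<in>V2. E v v \<and> (\<forall>u<n. E v u)"
  shows "good_graph n E"
proof -
  from cm have "\<exists>P. partition_on V1 P \<and> (\<forall>u\<in>V1. \<forall>v\<in>V1. E u v \<longleftrightarrow> \<not> (\<exists>X\<in>P. u \<in> X \<and> v \<in> X))"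
    unfolding induces_complete_multipartite_def .
  then obtain P where P: "partition_on V1 P"
    and adjb: "\<forall>u\<in>V1. \<forall>v\<in>V1. E u v \<longleftrightarrow> \<not> (\<exists>X\<in>P. u \<in> X \<and> v \<in> X)" by (elim exE conjE)
  have adj: "E u v \<longleftrightarrow> \<not> (\<exists>X\<in>P. u \<in> X \<and> v \<in> X)" if "u \<in> V1" "v \<in> V1" for u v
    using adjb that by simp
  have UP: "\<Union>P = V1" and dj: "disjoint P" using P by (simp_all add: partition_on_def)
  have dis: "X \<inter> Y = {}" if "X \<in> P" "Y \<in> P" "X \<noteq> Y" for X Y
    using dj that unfolding disjoint_def pairwise_def disjnt_def by blast
  have loopless: "\<not> E v v" if "v \<in> V1" for v
  proof -
    from that UP obtain X where "X \<in> P" "v \<in> X" by blast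
    thus ?thesis using adj[OF that that] by blast
  qed
  have inV1: "x \<in> V1" if "x < n" "\<not> E x x" for x
  proof -
    have "x \<in> V1 \<union> V2" by (subst V(2)) (use that in simp)
    moreover have "x \<notin> V2" using V2 that(2) by blast
    ultimately show ?thesis by blast
  qed
  show ?thesis unfolding good_graph_def
  proof (intro conjI allI impI)
    fix v u assume "v < n" "E v v" "u < n"
    hence "v \<in> V1 \<union> V2" by (subst V(2)) simp
    hence "v \<in> V2" using loopless \<open>E v v\<close> by blast
    thus "E v u" using V2 \<open>u < n\<close> by blast
  next
    fix c a b assume "c < n" "a < n" "b < n" "\<not> E c c" "\<not> E a a" "\<not> E b b" "\<not> E c a" "\<not> E c b"
    hence c: "c \<in> V1" and a: "a \<in> V1" and b: "b \<in> V1" using inV1 by auto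
    from adj[OF c a] \<open>\<not> E c a\<close> obtain X where X: "X \<in> P" "c \<in> X" "a \<in> X" by auto
    from adj[OF c b] \<open>\<not> E c b\<close> obtain Y where Y: "Y \<in> P" "c \<in> Y" "b \<in> Y" by auto
    have "X = Y"
    proof (rule ccontr)
      assume "X \<noteq> Y"
      from dis[OF X(1) Y(1) this] X(2) Y(2) show False by auto
    qed
    hence "\<exists>X\<in>P. a \<in> X \<and> b \<in> X" using X Y by auto
    thus "\<not> E a b" using adj[OF a b] by simp
  qed
qed

lemma good_imp_struct:
  assumes sym: "\<And>u v. u < n \<Longrightarrow> v < n \<Longrightarrow> E u v = E v u" and G: "good_graph n E"
  shows "\<exists>V1 V2. V1 \<inter> V2 = {} \<and> V1 \<union> V2 = {0..<n}
              \<and> induces_complete_multipartite E V1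
              \<and> (\<forall>v\<in>V2. E v v \<and> (\<forall>u<n. E v u))"
proof -
  have univ: "\<And>v u. v < n \<Longrightarrow> E v v \<Longrightarrow> u < n \<Longrightarrow> E v u" using G unfolding good_graph_def by blast
  have ctr: "\<And>c a b. c < n \<Longrightarrow> a < n \<Longrightarrow> b < n \<Longrightarrow> \<not> E c c \<Longrightarrow> \<not> E a a \<Longrightarrow> \<not> E b b \<Longrightarrow>
      \<not> E c a \<Longrightarrow> \<not> E c b \<Longrightarrow> \<not> E a b" using G unfolding good_graph_def by blast
  define V1 where "V1 = {v. v < n \<and> \<not> E v v}"
  define V2 where "V2 = {v. v < n \<and> E v v}"
  define B where "B v = {u. u < n \<and> \<not> E u u \<and> \<not> E v u}" for v
  define P where "P = B ` V1"
  have Bsame: "B s = B t" if s: "s \<in> V1" and t: "t \<in> V1" and x: "x \<in> B s" "x \<in> B t" for s t x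
  proof -
    have *: "B s \<subseteq> B t" if s: "s \<in> V1" and t: "t \<in> V1" and x: "x \<in> B s" "x \<in> B t" for s t x
    proof
      fix y assume y: "y \<in> B s"
      have "\<not> E x y" using ctr[of s x y] s x y unfolding V1_def B_def by auto
      moreover have "\<not> E x t" using x t sym[of x t] unfolding B_def V1_def by auto
      ultimately have "\<not> E t y" using ctr[of x t y] x t y unfolding B_def V1_def by auto
      thus "y \<in> B t" using y unfolding B_def by auto
    qed
    show ?thesis using *[OF s t x] *[OF t s x(2) x(1)] by blast
  qed
  have part: "partition_on V1 P"
    unfolding partition_on_def
  proof (intro conjI)
    show "\<Union> P = V1" unfolding P_def B_def V1_def by auto
    show "{} \<notin> P" unfolding P_def B_def V1_def by auto
    show "disjoint P" unfolding disjoint_def pairwise_def disjnt_def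
    proof (intro ballI impI)
      fix X Y assume XY: "X \<in> P" "Y \<in> P" "X \<noteq> Y"
      then obtain s t where st: "s \<in> V1" "t \<in> V1" "X = B s" "Y = B t" unfolding P_def by blast
      show "X \<inter> Y = {}"
      proof (rule ccontr)
        assume "X \<inter> Y \<noteq> {}"
        then obtain x where "x \<in> B s" "x \<in> B t" using st by blast
        from Bsame[OF st(1,2) this] st XY show False by simp
      qed
    qed
  qed
  have adj: "E u v \<longleftrightarrow> \<not> (\<exists>X\<in>P. u \<in> X \<and> v \<in> X)" if u: "u \<in> V1" and v: "v \<in> V1" for u v
  proof
    assume uv: "E u v"
    show "\<not> (\<exists>X\<in>P. u \<in> X \<and> v \<in> X)"
    proof
      assume "\<exists>X\<in>P. u \<in> X \<and> v \<in> X"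
      then obtain t where t: "t \<in> V1" "u \<in> B t" "v \<in> B t" unfolding P_def by blast
      hence "\<not> E u v" using ctr[of t u v] unfolding B_def V1_def by simp
      thus False using uv by simp
    qed
  next
    assume "\<not> (\<exists>X\<in>P. u \<in> X \<and> v \<in> X)"
    moreover have "u \<in> B u" using u unfolding B_def V1_def by auto
    ultimately have "v \<notin> B u" using u unfolding P_def by blast
    thus "E u v" using v unfolding B_def V1_def by auto
  qed
  have "V1 \<inter> V2 = {}" "V1 \<union> V2 = {0..<n}" unfolding V1_def V2_def by auto
  moreover have "induces_complete_multipartite E V1"
    unfolding induces_complete_multipartite_def using part adj by blast
  moreover have "\<forall>v\<in>V2. E v v \<and> (\<forall>u<n. E v u)" unfolding V2_def using univ by blast
  ultimately show ?thesis by blast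
qed

declare One_nat_def[simp del]

lemma lookup_single_if: "Poly_Mapping.lookup (Poly_Mapping.single k v) k' = (if k = k' then v else 0)"
  by (simp add: lookup_single when_def)

lemma lookup_ev2: "Poly_Mapping.lookup (evec x + evec y) z = (if x = z then 1 else 0) + (if y = z then 1 else 0)"
  by (simp add: lookup_add lookup_single_if)

lemma evec_sum_eq: "evec p + evec q = evec r + evec s \<longleftrightarrow> (p = r \<and> q = s) \<or> (p = s \<and> q = r)"
proof
  assume eq: "evec p + evec q = evec r + evec s"
  have L: "(if p = z then 1 else 0) + (if q = z then 1 else 0) = ((if r = z then 1 else 0) + (if s = z then 1 else 0) :: nat)" for z
    using arg_cong[OF eq, of "\<lambda>m. Poly_Mapping.lookup m z"] by (simp add: lookup_ev2)
  from L[of p] L[of q] L[of r] L[of s] show "(p = r \<and> q = s) \<or> (p = s \<and> q = r)"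
    by (auto split: if_splits)
qed (auto simp: add.commute)

lemma double_delta:
  fixes g :: "nat \<Rightarrow> nat \<Rightarrow> real"
  assumes "x < n" "y < n"
  shows "(\<Sum>i<n. \<Sum>j<n. if i = x \<and> j = y then g i j else 0) = g x y"
proof -
  have "(\<Sum>j<n. if i = x \<and> j = y then g i j else 0) = (if i = x then g x y else 0)" for i
  proof (cases "i = x")
    case True
    thus ?thesis using assms by simp
  qed simp
  hence "(\<Sum>i<n. \<Sum>j<n. if i = x \<and> j = y then g i j else 0) = (\<Sum>i<n. if i = x then g x y else 0)"
    by simp
  also have "\<dots> = g x y" using assms by simp
  finally show ?thesis .
qed

lemma lookup_QG: "Poly_Mapping.lookup (QG n E) m =
   (\<Sum>i<n. \<Sum>j<n. if evec i + evec j = m then (1/2) * adj_matrix n E $$ (i,j) else 0)"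
  unfolding QG_def lookup_sum lookup_single_if ..

lemma adj_entry: "i < n \<Longrightarrow> j < n \<Longrightarrow> adj_matrix n E $$ (i,j) = (if E i j then 1 else 0)"
  unfolding adj_matrix_def by simp

lemma lookup_QG_ev:
  assumes sym: "\<And>u v. u < n \<Longrightarrow> v < n \<Longrightarrow> E u v = E v u" and xy: "x < n" "y < n"
  shows "Poly_Mapping.lookup (QG n E) (evec x + evec y) = (if x = y then (if E x x then 1/2 else 0) else (if E x y then 1 else 0))"
proof -
  define g where "g i j = (1/2) * adj_matrix n E $$ (i,j)" for i j
  have "Poly_Mapping.lookup (QG n E) (evec x + evec y) =
     (\<Sum>i<n. \<Sum>j<n. if (i = x \<and> j = y) \<or> (i = y \<and> j = x) then g i j else 0)"
    unfolding lookup_QG g_def by (intro sum.cong refl) (simp only: evec_sum_eq)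
  also have "\<dots> = (if x = y then g x x else g x y + g y x)"
  proof (cases "x = y")
    case True
    thus ?thesis using xy double_delta[of x n x g] by simp
  next
    case False
    have "(\<Sum>i<n. \<Sum>j<n. if (i = x \<and> j = y) \<or> (i = y \<and> j = x) then g i j else 0)
       = (\<Sum>i<n. \<Sum>j<n. (if i = x \<and> j = y then g i j else 0) + (if i = y \<and> j = x then g i j else 0))"
      using False by (intro sum.cong refl) auto
    also have "\<dots> = g x y + g y x"
      using xy by (simp add: sum.distrib double_delta)
    finally show ?thesis using False by simp
  qed
  finally show ?thesis using xy sym[OF xy] unfolding g_def by (simp add: adj_entry)
qed

lemma lookup_QG_other:
  assumes "\<And>x y. x < n \<Longrightarrow> y < n \<Longrightarrow> m \<noteq> evec x + evec y"
  shows "Poly_Mapping.lookup (QG n E) m = 0"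
  unfolding lookup_QG using assms by (intro sum.neutral ballI) auto

lemma supp_QG_iff:
  assumes sym: "\<And>u v. u < n \<Longrightarrow> v < n \<Longrightarrow> E u v = E v u"
  shows "m \<in> supp (QG n E) \<longleftrightarrow> (\<exists>x<n. \<exists>y<n. m = evec x + evec y \<and> E x y)"
proof
  assume m: "m \<in> supp (QG n E)"
  hence nz: "Poly_Mapping.lookup (QG n E) m \<noteq> 0" unfolding supp_def by (simp add: in_keys_iff)
  then obtain x y where xy: "x < n" "y < n" "m = evec x + evec y"
    using lookup_QG_other[of n m E] by blast
  thus "\<exists>x<n. \<exists>y<n. m = evec x + evec y \<and> E x y"
    using nz lookup_QG_ev[OF sym xy(1,2)] by (auto split: if_splits)
next
  assume "\<exists>x<n. \<exists>y<n. m = evec x + evec y \<and> E x y"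
  then obtain x y where xy: "x < n" "y < n" "m = evec x + evec y" "E x y" by blast
  have L: "Poly_Mapping.lookup (QG n E) (evec x + evec y) = (if x = y then (if E x x then 1/2 else 0) else (if E x y then 1 else 0))"
    by (rule lookup_QG_ev[OF sym xy(1,2)])
  have "Poly_Mapping.lookup (QG n E) m \<noteq> 0"
    unfolding xy(3) L using xy(4) by auto
  thus "m \<in> supp (QG n E)" unfolding supp_def by (simp add: in_keys_iff)
qed

lemma ev_in_supp:
  assumes sym: "\<And>u v. u < n \<Longrightarrow> v < n \<Longrightarrow> E u v = E v u" and xy: "x < n" "y < n"
  shows "evec x + evec y \<in> supp (QG n E) \<longleftrightarrow> E x y"
proof
  assume "evec x + evec y \<in> supp (QG n E)"
  hence "\<exists>x'<n. \<exists>y'<n. evec x + evec y = evec x' + evec y' \<and> E x' y'"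
    by (simp only: supp_QG_iff[OF sym])
  then obtain x' y' where "x' < n" "y' < n" "evec x + evec y = evec x' + evec y'" "E x' y'"
    by blast
  thus "E x y" unfolding evec_sum_eq using sym xy by auto
next
  assume "E x y"
  hence "\<exists>x'<n. \<exists>y'<n. evec x + evec y = evec x' + evec y' \<and> E x' y'" using xy by blast
  thus "evec x + evec y \<in> supp (QG n E)" by (simp only: supp_QG_iff[OF sym])
qed

declare One_nat_def[simp del]

lemma mc_core:
  fixes i k r s :: nat
  assumes sym: "\<And>u v. u < n \<Longrightarrow> v < n \<Longrightarrow> E u v = E v u" and G: "good_graph n E"
    and lt: "i < n" "k < n" "r < n" "s < n" and ik: "E i k" and rs: "E r s"
    and gt: "(if i = i then 1 else 0) + (if k = i then 1 else 0) > ((if r = i then 1 else 0) + (if s = i then 1 else 0) :: nat)"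
  shows "\<exists>j\<in>{r,s}. (if i = j then 1 else 0) + (if k = j then 1 else 0) < ((if r = j then 1 else 0) + (if s = j then 1 else 0) :: nat) \<and> E k j"
proof -
  have univ: "\<And>v u. v < n \<Longrightarrow> E v v \<Longrightarrow> u < n \<Longrightarrow> E v u" using G unfolding good_graph_def by blast
  have ctr: "\<And>c a b. c < n \<Longrightarrow> a < n \<Longrightarrow> b < n \<Longrightarrow> \<not> E c c \<Longrightarrow> \<not> E a a \<Longrightarrow> \<not> E b b \<Longrightarrow>
      \<not> E c a \<Longrightarrow> \<not> E c b \<Longrightarrow> \<not> E a b" using G unfolding good_graph_def by blast
  show ?thesis
  proof (cases "i = k")
    case True
    hence kk: "E k k" using ik by simp
    show ?thesis
    proof (cases "r = i")
      case False
      thus ?thesis using True univ[OF lt(2) kk lt(3)] by auto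
    next
      case ri: True
      hence "s \<noteq> i" using gt True by auto
      thus ?thesis using True ri univ[OF lt(2) kk lt(4)] by auto
    qed
  next
    case ik': False
    hence ri: "r \<noteq> i" and si: "s \<noteq> i" using gt by (auto split: if_splits)
    show ?thesis
    proof (cases "r = s")
      case True
      hence "E r r" using rs by simp
      hence "E k r" using univ[OF lt(3) _ lt(2)] sym[OF lt(2,3)] by simp
      thus ?thesis using True ri by auto
    next
      case rs': False
      show ?thesis
      proof (cases "k = r")
        case True
        thus ?thesis using rs' si rs by auto
      next
        case kr: False
        show ?thesis
        proof (cases "k = s")
          case True
          thus ?thesis using rs' ri rs sym[OF lt(3,4)] by auto
        next
          case ks: False
          have "E k r \<or> E k s"
          proof (rule ccontr)
            assume nk: "\<not> (E k r \<or> E k s)"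
            have "\<not> E k k" using univ[OF lt(2) _ lt(3)] nk by blast
            moreover have "\<not> E r r" using univ[OF lt(3) _ lt(2)] sym[OF lt(2,3)] nk by blast
            moreover have "\<not> E s s" using univ[OF lt(4) _ lt(2)] sym[OF lt(2,4)] nk by blast
            ultimately have "\<not> E r s" using ctr[OF lt(2,3,4)] nk by blast
            thus False using rs by simp
          qed
          thus ?thesis using ri si kr ks rs' by auto
        qed
      qed
    qed
  qed
qed

lemma mconvex_iff_good:
  assumes sym: "\<And>u v. u < n \<Longrightarrow> v < n \<Longrightarrow> E u v = E v u"
    and no_isolated: "\<And>v. v < n \<Longrightarrow> \<exists>u<n. E v u"
  shows "M_convex (supp (QG n E)) \<longleftrightarrow> good_graph n E"
proof
  let ?S = "supp (QG n E)"
  have mem: "\<And>x y. x < n \<Longrightarrow> y < n \<Longrightarrow> evec x + evec y \<in> ?S \<longleftrightarrow> E x y" using ev_in_supp[where n=n and E=E, OF sym] by blast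
  assume MC: "M_convex ?S"
  have mc: "\<exists>j. Poly_Mapping.lookup a j < Poly_Mapping.lookup b j \<and> a - evec i + evec j \<in> ?S"
    if "a \<in> ?S" "b \<in> ?S" "Poly_Mapping.lookup a i > Poly_Mapping.lookup b i" for a b i
    using MC that unfolding M_convex_def by blast
  show "good_graph n E" unfolding good_graph_def
  proof (intro conjI allI impI)
    fix v u assume v: "v < n" "E v v" and u: "u < n"
    obtain t where t: "t < n" "E u t" using no_isolated[OF u] by blast
    show "E v u"
    proof (cases "t = v")
      case True
      thus ?thesis using t sym[OF u v(1)] by simp
    next
      case False
      have a: "evec t + evec u \<in> ?S" using mem[OF t(1) u] t sym[OF u t(1)] by simp
      have b: "evec v + evec v \<in> ?S" using mem[OF v(1) v(1)] v by simp
      have "Poly_Mapping.lookup (evec t + evec u) t > Poly_Mapping.lookup (evec v + evec v) t"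
        using False by (simp add: lookup_ev2)
      from mc[OF a b this] obtain j where
        j: "Poly_Mapping.lookup (evec t + evec u) j < Poly_Mapping.lookup (evec v + evec v) j"
        and jS: "evec t + evec u - evec t + evec j \<in> ?S" by blast
      have jv: "j = v" using j by (auto simp: lookup_ev2 split: if_splits)
      have "evec u + evec v \<in> ?S" using jS jv by simp
      hence "E u v" using mem[OF u v(1)] by simp
      thus ?thesis using sym[OF u v(1)] by simp
    qed
  next
    fix c a b assume lt: "c < n" "a < n" "b < n" and loops: "\<not> E c c" "\<not> E a a" "\<not> E b b"
      and nca: "\<not> E c a" and ncb: "\<not> E c b"
    show "\<not> E a b"
    proof
      assume ab: "E a b"
      obtain t where t: "t < n" "E c t" using no_isolated[OF lt(1)] by blast
      have ta: "t \<noteq> a" "t \<noteq> b" using t nca ncb by auto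
      have A: "evec t + evec c \<in> ?S" using mem[OF t(1) lt(1)] t sym[OF lt(1) t(1)] by simp
      have B: "evec a + evec b \<in> ?S" using mem[OF lt(2,3)] ab by simp
      have "Poly_Mapping.lookup (evec t + evec c) t > Poly_Mapping.lookup (evec a + evec b) t"
        using ta by (simp add: lookup_ev2)
      from mc[OF A B this] obtain j where
        j: "Poly_Mapping.lookup (evec t + evec c) j < Poly_Mapping.lookup (evec a + evec b) j"
        and jS: "evec t + evec c - evec t + evec j \<in> ?S" by blast
      have jab: "j = a \<or> j = b" using j by (auto simp: lookup_ev2 split: if_splits)
      have "evec c + evec j \<in> ?S" using jS by simp
      hence "E c j" using mem[OF lt(1)] jab lt by auto
      thus False using jab nca ncb by auto
    qed
  qed
next
  let ?S = "supp (QG n E)"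
  have mem: "\<And>x y. x < n \<Longrightarrow> y < n \<Longrightarrow> evec x + evec y \<in> ?S \<longleftrightarrow> E x y" using ev_in_supp[where n=n and E=E, OF sym] by blast
  assume G: "good_graph n E"
  show "M_convex ?S" unfolding M_convex_def
  proof (intro ballI allI impI)
    fix a b i assume aS: "a \<in> ?S" and bS: "b \<in> ?S" and gt: "Poly_Mapping.lookup a i > Poly_Mapping.lookup b i"
    from aS have "\<exists>p<n. \<exists>q<n. a = evec p + evec q \<and> E p q"
      by (simp only: supp_QG_iff[where n=n and E=E, OF sym])
    then obtain p q where pq: "p < n" "q < n" "a = evec p + evec q" "E p q" by blast
    from bS have "\<exists>r<n. \<exists>s<n. b = evec r + evec s \<and> E r s"
      by (simp only: supp_QG_iff[where n=n and E=E, OF sym])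
    then obtain r s where rs: "r < n" "s < n" "b = evec r + evec s" "E r s" by blast
    have "i = p \<or> i = q" using gt pq(3) by (auto simp: lookup_ev2 split: if_splits)
    then obtain k where k: "k < n" "i < n" "a = evec i + evec k" "E i k"
    proof
      assume "i = p" thus ?thesis using that pq by blast
    next
      assume "i = q" thus ?thesis using that[of p] pq sym[OF pq(1,2)] by (simp add: add.commute)
    qed
    have gt': "(if i = i then 1 else 0) + (if k = i then 1 else 0) > ((if r = i then 1 else 0) + (if s = i then 1 else 0) :: nat)"
      using gt k(3) rs(3) by (simp add: lookup_ev2)
    from mc_core[where n=n and E=E, OF sym G k(2) k(1) rs(1) rs(2) k(4) rs(4) gt'] obtain j where
      j: "j \<in> {r,s}" "(if i = j then 1 else 0) + (if k = j then 1 else 0) < ((if r = j then 1 else 0) + (if s = j then 1 else 0) :: nat)" "E k j"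
      by blast
    have jn: "j < n" using j(1) rs by auto
    have "Poly_Mapping.lookup a j < Poly_Mapping.lookup b j" using j(2) k(3) rs(3) by (simp add: lookup_ev2)
    moreover have "a - evec i + evec j \<in> ?S" using k(3) mem[OF k(1) jn] j(3) by simp
    ultimately show "\<exists>j. Poly_Mapping.lookup a j < Poly_Mapping.lookup b j \<and> a - evec i + evec j \<in> ?S" by blast
  qed
qed

declare One_nat_def[simp del]

definition bil :: "real mat \<Rightarrow> nat \<Rightarrow> (nat \<Rightarrow> real) \<Rightarrow> (nat \<Rightarrow> real) \<Rightarrow> real" where
  "bil A n f g = (\<Sum>i<n. \<Sum>j<n. A $$ (i,j) * f i * g j)"

lemma qf_bil: "qf A n f = bil A n f f" unfolding qf_def bil_def ..

lemma bil_swap: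
  assumes sym: "\<And>i j. i < n \<Longrightarrow> j < n \<Longrightarrow> A $$ (i,j) = A $$ (j,i)"
  shows "bil A n g f = bil A n f g"
proof -
  have "bil A n g f = (\<Sum>j<n. \<Sum>i<n. A $$ (i,j) * g i * f j)" unfolding bil_def by (rule sum.swap)
  also have "\<dots> = bil A n f g" unfolding bil_def by (auto simp: sym mult_ac intro!: sum.cong)
  finally show ?thesis .
qed

lemma qf_lin:
  assumes sym: "\<And>i j. i < n \<Longrightarrow> j < n \<Longrightarrow> A $$ (i,j) = A $$ (j,i)"
  shows "qf A n (\<lambda>k. a * X k + b * Y k) = a^2 * qf A n X + 2 * a * b * bil A n X Y + b^2 * qf A n Y"
proof -
  have "qf A n (\<lambda>k. a * X k + b * Y k) = a^2 * bil A n X X + a * b * bil A n X Y + a * b * bil A n Y X + b^2 * bil A n Y Y"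
    unfolding qf_def bil_def
    by (simp add: algebra_simps power2_eq_square sum.distrib sum_distrib_left)
  thus ?thesis using bil_swap[where g=Y and f=X and A=A and n=n, OF sym] by (simp add: qf_bil algebra_simps)
qed

lemma bil_supp:
  assumes S: "S \<subseteq> {..<n}" and T: "T \<subseteq> {..<n}"
    and f: "\<And>k. k \<notin> S \<Longrightarrow> f k = 0" and g: "\<And>k. k \<notin> T \<Longrightarrow> g k = 0"
  shows "bil A n f g = (\<Sum>i\<in>S. \<Sum>j\<in>T. A $$ (i,j) * f i * g j)"
proof -
  have fin: "finite S" "finite T" using S T finite_subset by auto
  have "bil A n f g = (\<Sum>i\<in>S. \<Sum>j<n. A $$ (i,j) * f i * g j)"
    unfolding bil_def by (rule sum.mono_neutral_right) (use S f in auto)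
  also have "\<dots> = (\<Sum>i\<in>S. \<Sum>j\<in>T. A $$ (i,j) * f i * g j)"
    by (intro sum.cong refl sum.mono_neutral_right) (use T g in auto)
  finally show ?thesis .
qed

lemma pd2:
  fixes p q r a b :: real
  assumes "p > 0" "p * r - q * q > 0" "a \<noteq> 0 \<or> b \<noteq> 0"
  shows "a^2 * p + 2 * a * b * q + b^2 * r > 0"
proof -
  have id: "p * (a^2 * p + 2 * a * b * q + b^2 * r) = (p * a + q * b)^2 + (p * r - q * q) * b^2"
    by (simp add: algebra_simps power2_eq_square)
  have "(p * a + q * b)^2 + (p * r - q * q) * b^2 > 0"
  proof (cases "b = 0")
    case True
    hence "a \<noteq> 0" using assms by simp
    thus ?thesis using True assms by simp
  next
    case False
    hence "(p * r - q * q) * b^2 > 0" using assms by simp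
    thus ?thesis by (simp add: add_nonneg_pos)
  qed
  hence "p * (a^2 * p + 2 * a * b * q + b^2 * r) > 0" using id by simp
  thus ?thesis using assms(1) by (simp add: zero_less_mult_iff)
qed

declare One_nat_def[simp del]

lemma adj_entry': "i < n \<Longrightarrow> j < n \<Longrightarrow> adj_matrix n E $$ (i,j) = (if E i j then 1 else 0)"
  unfolding adj_matrix_def by simp

lemma adj_sym:
  assumes sym: "\<And>u v. u < n \<Longrightarrow> v < n \<Longrightarrow> E u v = E v u"
  shows "\<And>i j. i < n \<Longrightarrow> j < n \<Longrightarrow> adj_matrix n E $$ (i,j) = adj_matrix n E $$ (j,i)"
  using sym by (simp add: adj_entry')

lemma not_hyp_neg2:
  assumes sym: "\<And>i j. i < n \<Longrightarrow> j < n \<Longrightarrow> A $$ (i,j) = A $$ (j,i)"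
    and p: "qf A n X > 0" and d: "qf A n X * qf A n Y - bil A n X Y * bil A n X Y > 0"
  shows "\<not> hyp_neg A n"
  by (rule not_hyp_neg[of _ _ X Y]) (simp add: qf_lin[OF sym] pd2[OF p d])

lemma bad_loop_a:
  assumes sym: "\<And>u v. u < n \<Longrightarrow> v < n \<Longrightarrow> E u v = E v u"
    and lt: "v < n" "u < n" and vv: "E v v" and uu: "E u u" and vu: "\<not> E v u"
  shows "\<not> hyp_neg (adj_matrix n E) n"
proof -
  have uv: "u \<noteq> v" using vv vu by auto
  let ?A = "adj_matrix n E"
  define X where "X k = (if k = v then 1 else 0 :: real)" for k
  define Y where "Y k = (if k = u then 1 else 0 :: real)" for k
  have sX: "{v} \<subseteq> {..<n}" "\<And>k. k \<notin> {v} \<Longrightarrow> X k = 0" using lt unfolding X_def by auto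
  have sY: "{u} \<subseteq> {..<n}" "\<And>k. k \<notin> {u} \<Longrightarrow> Y k = 0" using lt unfolding Y_def by auto
  have "qf ?A n X = 1" unfolding qf_bil
    by (subst bil_supp[OF sX(1) sX(1) sX(2) sX(2)]) (insert lt vv, simp_all add: X_def adj_entry')
  moreover have "qf ?A n Y = 1" unfolding qf_bil
    by (subst bil_supp[OF sY(1) sY(1) sY(2) sY(2)]) (insert lt uu, simp_all add: Y_def adj_entry')
  moreover have "bil ?A n X Y = 0" 
    by (subst bil_supp[OF sX(1) sY(1) sX(2) sY(2)]) (insert lt vu, simp_all add: X_def Y_def adj_entry')
  ultimately show ?thesis by (intro not_hyp_neg2[where X=X and Y=Y, OF adj_sym[OF sym]]) auto
qed

lemma bad_loop_b:
  assumes sym: "\<And>u v. u < n \<Longrightarrow> v < n \<Longrightarrow> E u v = E v u"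
    and lt: "v < n" "u < n" "t < n" and vv: "E v v" and vu: "\<not> E v u" and ut: "E u t" and tu: "t \<noteq> u"
  shows "\<not> hyp_neg (adj_matrix n E) n"
proof -
  have uv: "u \<noteq> v" using vv vu by auto
  have tv: "t \<noteq> v" using vu ut sym[OF lt(2,1)] by auto
  let ?A = "adj_matrix n E"
  define X where "X k = (if k = v then 1 else 0 :: real)" for k
  define Y where "Y k = (if k = u then 1 else 0) + (if k = t then 1 else 0 :: real)" for k
  have sX: "{v} \<subseteq> {..<n}" "\<And>k. k \<notin> {v} \<Longrightarrow> X k = 0" using lt unfolding X_def by auto
  have sY: "{u,t} \<subseteq> {..<n}" "\<And>k. k \<notin> {u,t} \<Longrightarrow> Y k = 0" using lt unfolding Y_def by auto
  define e where "e = (if E v t then 1 else 0 :: real)"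
  define g where "g = (if E u u then 1 else 0) + (if E t t then 1 else 0 :: real)"
  have "qf ?A n X = 1" unfolding qf_bil
    by (subst bil_supp[OF sX(1) sX(1) sX(2) sX(2)]) (insert lt vv, simp_all add: X_def adj_entry')
  moreover have "qf ?A n Y = 2 + g" unfolding qf_bil
    by (subst bil_supp[OF sY(1) sY(1) sY(2) sY(2)]) (insert lt ut tu sym[OF lt(2,3)], simp_all add: Y_def adj_entry' g_def)
  moreover have "bil ?A n X Y = e" 
    by (subst bil_supp[OF sX(1) sY(1) sX(2) sY(2)]) (insert lt vu tu tv uv, simp_all add: X_def Y_def adj_entry' e_def)
  moreover have "1 * (2 + g) - e * e > 0" unfolding e_def g_def by auto
  ultimately show ?thesis by (intro not_hyp_neg2[where X=X and Y=Y, OF adj_sym[OF sym]]) auto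
qed

lemma bad_center:
  assumes sym: "\<And>u v. u < n \<Longrightarrow> v < n \<Longrightarrow> E u v = E v u"
    and lt: "c < n" "a < n" "b < n" "t < n" and loops: "\<not> E c c" "\<not> E a a" "\<not> E b b"
    and ca: "\<not> E c a" and cb: "\<not> E c b" and ab: "E a b" and ct: "E c t"
  shows "\<not> hyp_neg (adj_matrix n E) n"
proof -
  have d: "a \<noteq> b" "c \<noteq> a" "c \<noteq> b" "t \<noteq> a" "t \<noteq> b" "t \<noteq> c" using loops ca cb ab ct sym[OF lt(2,3)] by auto
  let ?A = "adj_matrix n E"
  define X where "X k = (if k = a then 1 else 0) + (if k = b then 1 else 0 :: real)" for k
  define Y where "Y k = (if k = c then 2 else 0) + (if k = t then 1 else 0 :: real)" for k
  have sX: "{a,b} \<subseteq> {..<n}" "\<And>k. k \<notin> {a,b} \<Longrightarrow> X k = 0" using lt unfolding X_def by auto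
  have sY: "{c,t} \<subseteq> {..<n}" "\<And>k. k \<notin> {c,t} \<Longrightarrow> Y k = 0" using lt unfolding Y_def by auto
  define e where "e = (if E a t then 1 else 0) + (if E b t then 1 else 0 :: real)"
  define g where "g = (if E t t then 1 else 0 :: real)"
  have "qf ?A n X = 2" unfolding qf_bil
    by (subst bil_supp[OF sX(1) sX(1) sX(2) sX(2)]) (insert lt d loops ab sym[OF lt(2,3)], simp_all add: X_def adj_entry')
  moreover have "qf ?A n Y = 4 + g" unfolding qf_bil
    by (subst bil_supp[OF sY(1) sY(1) sY(2) sY(2)]) (insert lt d loops ct sym[OF lt(1,4)], simp_all add: Y_def adj_entry' g_def)
  moreover have "bil ?A n X Y = e" 
    by (subst bil_supp[OF sX(1) sY(1) sX(2) sY(2)]) (insert lt d ca cb sym[OF lt(2,1)] sym[OF lt(3,1)], simp_all add: X_def Y_def adj_entry' e_def)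
  moreover have "2 * (4 + g) - e * e > 0" unfolding e_def g_def by auto
  ultimately show ?thesis by (intro not_hyp_neg2[where X=X and Y=Y, OF adj_sym[OF sym]]) auto
qed

lemma good_hyp_neg:
  assumes sym: "\<And>u v. u < n \<Longrightarrow> v < n \<Longrightarrow> E u v = E v u" and G: "good_graph n E"
  shows "hyp_neg (adj_matrix n E) n"
proof -
  obtain V1 V2 where V: "V1 \<inter> V2 = {}" "V1 \<union> V2 = {0..<n}" and cm: "induces_complete_multipartite E V1"
    and V2: "\<forall>v\<in>V2. E v v \<and> (\<forall>u<n. E v u)"
    using good_imp_struct[where n=n and E=E, OF sym G] by blast
  from cm have "\<exists>P. partition_on V1 P \<and> (\<forall>u\<in>V1. \<forall>v\<in>V1. E u v \<longleftrightarrow> \<not> (\<exists>X\<in>P. u \<in> X \<and> v \<in> X))"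
    unfolding induces_complete_multipartite_def .
  then obtain P where P: "partition_on V1 P"
    and adjb: "\<forall>u\<in>V1. \<forall>v\<in>V1. E u v \<longleftrightarrow> \<not> (\<exists>X\<in>P. u \<in> X \<and> v \<in> X)" by (elim exE conjE)
  have UP: "\<Union>P = V1" and dj: "disjoint P" using P by (simp_all add: partition_on_def)
  have dis: "X = Y" if "X \<in> P" "Y \<in> P" "x \<in> X" "x \<in> Y" for X Y x
    using dj that unfolding disjoint_def pairwise_def disjnt_def by blast
  have V1n: "V1 \<subseteq> {..<n}" using V(2) by auto
  have finV1: "finite V1" using V1n finite_subset by blast
  have finP: "finite P" using finV1 UP by (metis finite_UnionD)
  have finX: "finite X" if "X \<in> P" for X using that UP finV1 by (metis Union_upper finite_subset)
  define ind where "ind i j \<longleftrightarrow> i \<in> V1 \<and> j \<in> V1 \<and> (\<exists>X\<in>P. i \<in> X \<and> j \<in> X)" for i j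
  have Aent: "adj_matrix n E $$ (i,j) = (if ind i j then 0 else 1)" if ij: "i < n" "j < n" for i j
  proof -
    have i: "i \<in> V1 \<union> V2" and j: "j \<in> V1 \<union> V2" using ij V(2) by auto
    show ?thesis
    proof (cases "i \<in> V2")
      case True
      hence "E i j" "\<not> ind i j" using V2 ij V(1) unfolding ind_def by auto
      thus ?thesis using ij by (simp add: adj_entry')
    next
      case False
      note iV2 = False
      show ?thesis
      proof (cases "j \<in> V2")
        case True
        hence "E i j" "\<not> ind i j" using V2 ij V(1) sym[OF ij] unfolding ind_def by auto
        thus ?thesis using ij by (simp add: adj_entry')
      next
        case False
        hence "i \<in> V1" "j \<in> V1" using i j iV2 by auto
        thus ?thesis using adjb ij unfolding ind_def by (simp add: adj_entry')
      qed
    qed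
  qed
  show ?thesis unfolding hyp_neg_def
  proof (intro exI[of _ "\<lambda>_. 1"] allI impI)
    fix f :: "nat \<Rightarrow> real" assume s0: "(\<Sum>i<n. 1 * f i) = 0"
    define T where "T = (\<Sum>i<n. \<Sum>j<n. if ind i j then f i * f j else 0)"
    have "qf (adj_matrix n E) n f = (\<Sum>i<n. \<Sum>j<n. f i * f j - (if ind i j then f i * f j else 0))"
      unfolding qf_def by (intro sum.cong refl) (simp add: Aent)
    also have "\<dots> = (\<Sum>i<n. \<Sum>j<n. f i * f j) - T"
      unfolding T_def by (simp add: sum_subtractf)
    also have "(\<Sum>i<n. \<Sum>j<n. f i * f j) = (\<Sum>i<n. f i) * (\<Sum>j<n. f j)"
      by (simp add: sum_product)
    also have "\<dots> = 0" using s0 by simp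
    finally have qfT: "qf (adj_matrix n E) n f = - T" by simp
    have "T = (\<Sum>i\<in>V1. \<Sum>j<n. if ind i j then f i * f j else 0)"
      unfolding T_def by (rule sum.mono_neutral_right) (use V1n in \<open>auto simp: ind_def\<close>)
    also have "\<dots> = (\<Sum>i\<in>V1. \<Sum>j\<in>V1. if ind i j then f i * f j else 0)"
      by (intro sum.cong refl sum.mono_neutral_right) (use V1n in \<open>auto simp: ind_def\<close>)
    also have "\<dots> = (\<Sum>X\<in>P. \<Sum>i\<in>X. \<Sum>j\<in>V1. if ind i j then f i * f j else 0)"
    proof -
      define G where "G i = (\<Sum>j\<in>V1. if ind i j then f i * f j else 0)" for i
      have "sum G (\<Union>P) = (sum \<circ> sum) G P"
        by (rule sum.Union_disjoint) (use finX dis in auto)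
      hence "(\<Sum>i\<in>\<Union>P. G i) = (\<Sum>X\<in>P. \<Sum>i\<in>X. G i)" by simp
      thus ?thesis unfolding G_def UP .
    qed
    also have "\<dots> = (\<Sum>X\<in>P. (\<Sum>i\<in>X. f i)^2)"
    proof (rule sum.cong[OF refl])
      fix X assume X: "X \<in> P"
      have XV1: "X \<subseteq> V1" using X UP by blast
      have "(\<Sum>i\<in>X. \<Sum>j\<in>V1. if ind i j then f i * f j else 0) = (\<Sum>i\<in>X. \<Sum>j\<in>X. f i * f j)"
      proof (rule sum.cong[OF refl])
        fix i assume i: "i \<in> X"
        have "(\<Sum>j\<in>V1. if ind i j then f i * f j else 0) = (\<Sum>j\<in>V1. if j \<in> X then f i * f j else 0)"
        proof (rule sum.cong[OF refl])
          fix j assume j: "j \<in> V1"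
          have "ind i j \<longleftrightarrow> j \<in> X" using dis[OF X _ i] X i j XV1 unfolding ind_def by blast
          thus "(if ind i j then f i * f j else 0) = (if j \<in> X then f i * f j else 0)" by simp
        qed
        also have "\<dots> = (\<Sum>j\<in>V1 \<inter> X. f i * f j)" by (rule sum.inter_restrict[symmetric, OF finV1])
        also have "V1 \<inter> X = X" using XV1 by blast
        finally show "(\<Sum>j\<in>V1. if ind i j then f i * f j else 0) = (\<Sum>j\<in>X. f i * f j)" .
      qed
      also have "\<dots> = (\<Sum>i\<in>X. f i)^2" by (simp add: power2_eq_square sum_product)
      finally show "(\<Sum>i\<in>X. \<Sum>j\<in>V1. if ind i j then f i * f j else 0) = (\<Sum>i\<in>X. f i)^2" .
    qed
    finally have "T \<ge> 0" by (simp add: sum_nonneg)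
    thus "qf (adj_matrix n E) n f \<le> 0" using qfT by simp
  qed
qed

lemma hyp_neg_adj_iff_good:
  assumes sym: "\<And>u v. u < n \<Longrightarrow> v < n \<Longrightarrow> E u v = E v u"
    and no_isolated: "\<And>v. v < n \<Longrightarrow> \<exists>u<n. E v u"
  shows "hyp_neg (adj_matrix n E) n \<longleftrightarrow> good_graph n E"
proof
  assume hn: "hyp_neg (adj_matrix n E) n"
  show "good_graph n E" unfolding good_graph_def
  proof (intro conjI allI impI)
    fix v u assume v: "v < n" "E v v" and u: "u < n"
    show "E v u"
    proof (rule ccontr)
      assume vu: "\<not> E v u"
      obtain t where t: "t < n" "E u t" using no_isolated[OF u] by blast
      show False
      proof (cases "t = u")
        case True
        thus False using bad_loop_a[where n=n and E=E, OF sym v(1) u v(2) _ vu] t hn by simp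
      next
        case False
        thus False using bad_loop_b[where n=n and E=E, OF sym v(1) u t(1) v(2) vu t(2)] hn by simp
      qed
    qed
  next
    fix c a b assume lt: "c < n" "a < n" "b < n" and loops: "\<not> E c c" "\<not> E a a" "\<not> E b b"
      and ca: "\<not> E c a" and cb: "\<not> E c b"
    show "\<not> E a b"
    proof
      assume ab: "E a b"
      obtain t where t: "t < n" "E c t" using no_isolated[OF lt(1)] by blast
      show False using bad_center[where n=n and E=E, OF sym lt t(1) loops ca cb ab t(2)] hn by simp
    qed
  qed
next
  assume G: "good_graph n E"
  show "hyp_neg (adj_matrix n E) n" by (rule good_hyp_neg) (use sym G in auto)
qed

declare One_nat_def[simp del]

lemma lookup_mpderiv:
  "Poly_Mapping.lookup (mpderiv i f) m = of_nat (Poly_Mapping.lookup m i + 1) * Poly_Mapping.lookup f (m + evec i)"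
proof -
  have "{m. of_nat (Poly_Mapping.lookup m i + 1) * Poly_Mapping.lookup f (m + evec i) \<noteq> (0::real)}
        \<subseteq> (\<lambda>m. m + evec i) -` Poly_Mapping.keys f"
    by (auto simp: in_keys_iff)
  moreover have "finite ((\<lambda>m. m + evec i) -` Poly_Mapping.keys f)"
    by (rule finite_vimageI) (auto simp: inj_on_def)
  ultimately have fin: "finite {m. of_nat (Poly_Mapping.lookup m i + 1) * Poly_Mapping.lookup f (m + evec i) \<noteq> (0::real)}"
    by (rule finite_subset)
  show ?thesis unfolding mpderiv_def by (simp only: lookup_Abs_poly_mapping[OF fin])
qed

lemma hessian_QG:
  assumes sym: "\<And>u v. u < n \<Longrightarrow> v < n \<Longrightarrow> E u v = E v u"
  shows "hessian n (QG n E) = adj_matrix n E"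
proof (rule eq_matI)
  fix i j assume "i < dim_row (adj_matrix n E)" "j < dim_col (adj_matrix n E)"
  hence ij: "i < n" "j < n" unfolding adj_matrix_def by auto
  have "hessian n (QG n E) $$ (i,j) = Poly_Mapping.lookup (mpderiv i (mpderiv j (QG n E))) 0"
    unfolding hessian_def using ij by simp
  also have "\<dots> = of_nat (Poly_Mapping.lookup (evec i) j + 1) * Poly_Mapping.lookup (QG n E) (evec i + evec j)"
    by (simp add: lookup_mpderiv)
  also have "\<dots> = adj_matrix n E $$ (i,j)"
    using ij by (simp add: lookup_QG_ev[where n=n and E=E, OF sym] lookup_single_if adj_entry)
  finally show "hessian n (QG n E) $$ (i,j) = adj_matrix n E $$ (i,j)" .
qed (auto simp: hessian_def adj_matrix_def)

lemma keys_ev2: "Poly_Mapping.keys (evec x + evec y) = {x, y}"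
  by (auto simp: in_keys_iff lookup_ev2 split: if_splits)

lemma lorentzian_QG:
  assumes sym: "\<And>u v. u < n \<Longrightarrow> v < n \<Longrightarrow> E u v = E v u"
  shows "lorentzian n 2 (QG n E) \<longleftrightarrow> antiferromagnetic n E"
proof -
  have lor: "lorentzian n 2 f \<longleftrightarrow> in_vars n f \<and> homogeneous 2 f \<and> nonneg_coeffs f \<and> at_most_one_pos_eig (hessian n f)" for f
    by (simp add: numeral_2_eq_2)
  have iv: "in_vars n (QG n E)" unfolding in_vars_def
  proof (intro ballI)
    fix m k assume m: "m \<in> supp (QG n E)" and k: "k \<in> Poly_Mapping.keys m"
    from m have "\<exists>x<n. \<exists>y<n. m = evec x + evec y \<and> E x y"
      by (simp only: supp_QG_iff[where n=n and E=E, OF sym])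
    then obtain x y where "x < n" "y < n" "m = evec x + evec y" by blast
    thus "k < n" using k by (auto simp: keys_ev2)
  qed
  have hom: "homogeneous 2 (QG n E)" unfolding homogeneous_def
  proof
    fix m assume m: "m \<in> supp (QG n E)"
    from m have "\<exists>x<n. \<exists>y<n. m = evec x + evec y \<and> E x y"
      by (simp only: supp_QG_iff[where n=n and E=E, OF sym])
    then obtain x y where "x < n" "y < n" "m = evec x + evec y" by blast
    moreover have "mdeg (evec x + evec y) = 2" unfolding mdeg_def keys_ev2
      by (cases "x = y") (auto simp: lookup_ev2)
    ultimately show "mdeg m = 2" by simp
  qed
  have nn: "nonneg_coeffs (QG n E)" unfolding nonneg_coeffs_def
    by (auto simp: lookup_QG adj_matrix_def intro!: sum_nonneg)
  have H: "hessian n (QG n E) = adj_matrix n E" by (rule hessian_QG) (rule sym)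
  show ?thesis using iv hom nn H by (simp add: lor antiferromagnetic_def)
qed

theorem theorem3p2:
  fixes n :: nat and E :: "nat \<Rightarrow> nat \<Rightarrow> bool"
  assumes sym: "\<And>u v. u < n \<Longrightarrow> v < n \<Longrightarrow> E u v = E v u"
    and no_isolated: "\<And>v. v < n \<Longrightarrow> \<exists>u<n. E v u"
  shows "(antiferromagnetic n E \<longleftrightarrow> lorentzian n 2 (QG n E))
       \<and> (lorentzian n 2 (QG n E) \<longleftrightarrow> M_convex (supp (QG n E)))
       \<and> (M_convex (supp (QG n E)) \<longleftrightarrow>
           (\<exists>V1 V2. V1 \<inter> V2 = {} \<and> V1 \<union> V2 = {0..<n}
              \<and> induces_complete_multipartite E V1
              \<and> (\<forall>v\<in>V2. E v v \<and> (\<forall>u<n. E v u))))"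
proof -
  have Ac: "adj_matrix n E \<in> carrier_mat n n" unfolding adj_matrix_def by simp
  have AT: "transpose_mat (adj_matrix n E) = adj_matrix n E"
    by (rule eq_matI) (auto simp: adj_matrix_def sym)
  have L: "lorentzian n 2 (QG n E) \<longleftrightarrow> antiferromagnetic n E"
    by (rule lorentzian_QG) (rule sym)
  have A: "antiferromagnetic n E \<longleftrightarrow> good_graph n E"
  proof -
    have "antiferromagnetic n E \<longleftrightarrow> hyp_neg (adj_matrix n E) n"
      unfolding antiferromagnetic_def by (rule pos_eig_iff[OF Ac AT])
    also have "\<dots> \<longleftrightarrow> good_graph n E"
      by (rule hyp_neg_adj_iff_good) (use sym no_isolated in auto)
    finally show ?thesis .
  qed
  have M: "M_convex (supp (QG n E)) \<longleftrightarrow> good_graph n E"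
    by (rule mconvex_iff_good) (use sym no_isolated in auto)
  have S: "(\<exists>V1 V2. V1 \<inter> V2 = {} \<and> V1 \<union> V2 = {0..<n}
              \<and> induces_complete_multipartite E V1
              \<and> (\<forall>v\<in>V2. E v v \<and> (\<forall>u<n. E v u))) \<longleftrightarrow> good_graph n E"
  proof
    assume "\<exists>V1 V2. V1 \<inter> V2 = {} \<and> V1 \<union> V2 = {0..<n}
              \<and> induces_complete_multipartite E V1
              \<and> (\<forall>v\<in>V2. E v v \<and> (\<forall>u<n. E v u))"
    then obtain V1 V2 where "V1 \<inter> V2 = {}" "V1 \<union> V2 = {0..<n}" "induces_complete_multipartite E V1"
      "\<forall>v\<in>V2. E v v \<and> (\<forall>u<n. E v u)" by blast
    thus "good_graph n E" by (rule struct_imp_good)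
  next
    assume G: "good_graph n E"
    show "\<exists>V1 V2. V1 \<inter> V2 = {} \<and> V1 \<union> V2 = {0..<n}
              \<and> induces_complete_multipartite E V1
              \<and> (\<forall>v\<in>V2. E v v \<and> (\<forall>u<n. E v u))"
      by (rule good_imp_struct) (use sym G in auto)
  qed
  show ?thesis using L A M S by blast
qed

end
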